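(* Under Assumption 1, for any choice of admissible input shares $a=(a_i)_{i\in M}$ and productivities $\lambda_i(a_i)>0$, the economy $\mathcal{E}(\lambda,a)$ has a general equilibrium, unique up to price normalization. Normalizing $p_0=1$: (1) the equilibrium revenues $\bar v_i:=\bar p_i\bar y_i$ ($i\in M$) satisfy $\begin{pmatrix}1\\ \bar v\end{pmatrix}=\tilde A\begin{pmatrix}1\\ \bar v\end{pmatrix}$, i.e. for all $j\in M$, $\bar v_j=a_{0,j}+a_{0,j}\sum_{i\in M}\varepsilon_i\bar v_i+\sum_{i\in M}a_{i,j}\bar v_i$, and $\sum_{i\in M}a_{i,0}\bar v_i=1$; (2) equilibrium profits are $\bar\pi_i=(1-\sum_{j\in N}a_{i,j})\bar v_i=(1-\sum_\ell b_{i,\ell})\bar v_i$; (3) equilibrium prices satisfy $\log(\bar p)=(A-I)^{-1}u+(A-I)^{-1}D\log(\bar v)$, where $\log(\bar p)$, $\log(\bar v)$ are taken coordinatewise over $M$, $u_i=\log\lambda_i(a_i)+\sum_{j\in N}a_{i,j}\log a_{i,j}$ (with $0\log 0=0$), and $D=\mathrm{diag}\big(\sum_{j\in N}a_{i,j}-1\big)_{i\in M}$.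
   Context: Economy: a representative household indexed $0$ and firms $M=\{1,\dots,m\}$; $N=M\cup\{0\}$, where index $0$ also denotes the labor good. Sectors: labor is sector $0$ with $M_0=\{0\}$; $M_\ell$ is the set of firms of sector $\ell$. The household supplies one unit of labor, receives all firms' profits, and has utility $u(x_0)=\prod_{j\in M}x_{0,j}^{a_{0,j}}$ with $a_0\in\mathbb{R}^M_+$, $\sum_j a_{0,j}=1$. Each firm $i$ has requirement vector $b_i\ge0$, $\sum_\ell b_{i,\ell}\le1$, and input shares $a_i\in\mathbb{R}^N_+$ with $\sum_{j\in M_\ell}a_{i,j}=b_{i,\ell}$ for every sector $\ell$; its production function is $f_{a,i}(x_i)=\lambda_i(a_i)\prod_{j\in N}x_{i,j}^{a_{i,j}}$. $\varepsilon_i:=1-\sum_{j\in N}a_{i,j}$. $A=(a_{i,j})_{i,j\in M}$. The economy $\mathcal{E}(\lambda,a)$: a general equilibrium is $(\bar p,\bar x,\bar y)$ with $\bar p\in\mathbb{R}^N_+$, $\bar y_0=1$, such that each firm $i$ maximizes $\bar p_iy_i-\bar p\cdot x_i$ subject to $y_i=f_{a,i}(x_i)$; the household maximizes $u(x_0)$ subject to $\bar p\cdot x_0\le \bar p_0+\sum_{j\in M}(\bar p_j\bar y_j-\bar p\cdot\bar x_j)$; and markets clear: $\sum_{j\in N}\bar x_{j,i}=\bar y_i$ for all $i\in N$. The matrix $\tilde A$ on $N\times N$: $\tilde A_{0,0}=0$, $\tilde A_{0,j}=a_{j,0}$, $\tilde A_{i,0}=a_{0,i}$, $\tilde A_{i,j}=a_{j,i}+\varepsilon_ja_{0,i}$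 ($i,j\in M$). Assumption 1: $a_0\in\mathbb{R}^M_{++}$; $b_{i,0}>0$ for all $i$; some firm $i_0$ has $b_{i_0,\ell}>0$ for some sector $\ell\ne0$. *)

theory Defs
  imports "HOL-Analysis.Analysis"
begin

text \<open>Firms are the elements of a finite type 'n (the set M).
 Goods/agents N = M \<union> {0} are modelled by the type 'n option:
 None is the household / labor good (index 0), Some i is firm i / its good.
 Non-labor sectors are the elements of a finite type 's; sec i is the sector of firm i,
 so M_l = {i. sec i = l}. Sector indices are 's option, None being the labor sector 0
 with M_0 = {0}.\<close>

text \<open>Power with the Cobb-Douglas convention 0^0 = 1 (Isabelle's powr has 0 powr 0 = 0).\<close>
definition cpow :: "real \<Rightarrow> real \<Rightarrow> real" where
  "cpow x e = (if e = 0 then 1 else x powr e)"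

definition xlogx :: "real \<Rightarrow> real" where
  "xlogx t = (if t = 0 then 0 else t * ln t)"

definition utility :: "('n::finite \<Rightarrow> real) \<Rightarrow> ('n option \<Rightarrow> real) \<Rightarrow> real" where
  "utility a0 x0 = (\<Prod>j\<in>UNIV. cpow (x0 (Some j)) (a0 j))"

definition prodfun :: "('n::finite \<Rightarrow> real) \<Rightarrow> ('n \<Rightarrow> 'n option \<Rightarrow> real) \<Rightarrow> 'n
                        \<Rightarrow> ('n option \<Rightarrow> real) \<Rightarrow> real" where
  "prodfun lam a i xi = lam i * (\<Prod>j\<in>UNIV. cpow (xi j) (a i j))"

definition eps :: "('n::finite \<Rightarrow> 'n option \<Rightarrow> real) \<Rightarrow> 'n \<Rightarrow> real" where
  "eps a i = 1 - (\<Sum>j\<in>UNIV. a i j)"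

definition nonneg :: "('a \<Rightarrow> real) \<Rightarrow> bool" where
  "nonneg z \<longleftrightarrow> (\<forall>k. 0 \<le> z k)"

definition dotp :: "('n::finite option \<Rightarrow> real) \<Rightarrow> ('n option \<Rightarrow> real) \<Rightarrow> real" where
  "dotp p z = (\<Sum>j\<in>UNIV. p j * z j)"

definition profit :: "('n::finite option \<Rightarrow> real) \<Rightarrow> 'n \<Rightarrow> real \<Rightarrow> ('n option \<Rightarrow> real) \<Rightarrow> real" where
  "profit p i yi xi = p (Some i) * yi - dotp p xi"

definition income :: "('n::finite option \<Rightarrow> real) \<Rightarrow> ('n option \<Rightarrow> 'n option \<Rightarrow> real)
                       \<Rightarrow> ('n option \<Rightarrow> real) \<Rightarrow> real" where
  "income p x y = p None + (\<Sum>j\<in>UNIV. profit p j (y (Some j)) (x (Some j)))"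

text \<open>General equilibrium (p, x, y) of the economy E(lambda, a); x agent good is the
 input (resp. consumption) of good 'good' by agent 'agent'; y agent is the output,
 with y None = 1 the household's labor endowment.\<close>
definition general_equilibrium ::
  "('n::finite \<Rightarrow> real) \<Rightarrow> ('n \<Rightarrow> real) \<Rightarrow> ('n \<Rightarrow> 'n option \<Rightarrow> real)
   \<Rightarrow> ('n option \<Rightarrow> real) \<Rightarrow> ('n option \<Rightarrow> 'n option \<Rightarrow> real) \<Rightarrow> ('n option \<Rightarrow> real) \<Rightarrow> bool" where
  "general_equilibrium a0 lam a p x y \<longleftrightarrow>
     nonneg p \<and> y None = 1 \<and>
     (\<forall>i. nonneg (x (Some i)) \<and> y (Some i) = prodfun lam a i (x (Some i)) \<and>
          (\<forall>xi. nonneg xi \<longrightarrow>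
                profit p i (prodfun lam a i xi) xi \<le> profit p i (y (Some i)) (x (Some i)))) \<and>
     nonneg (x None) \<and> dotp p (x None) \<le> income p x y \<and>
     (\<forall>x0. nonneg x0 \<longrightarrow> dotp p x0 \<le> income p x y \<longrightarrow> utility a0 x0 \<le> utility a0 (x None)) \<and>
     (\<forall>g. (\<Sum>j\<in>UNIV. x j g) = y g)"

definition admissible ::
  "('n::finite \<Rightarrow> 's::finite) \<Rightarrow> ('n \<Rightarrow> 's option \<Rightarrow> real) \<Rightarrow> ('n \<Rightarrow> 'n option \<Rightarrow> real) \<Rightarrow> bool" where
  "admissible sec b a \<longleftrightarrow>
     (\<forall>i. nonneg (a i) \<and> a i None = b i None \<and>
          (\<forall>l. (\<Sum>j\<in>{j. sec j = l}. a i (Some j)) = b i (Some l)))"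

definition shareA :: "('n::finite \<Rightarrow> 'n option \<Rightarrow> real) \<Rightarrow> real^'n^'n" where
  "shareA a = (\<chi> i j. a i (Some j))"

end

theory Submission
  imports Defs
begin


lemma sum_option_split:
  fixes f :: "'n::finite option \<Rightarrow> 'b::comm_monoid_add"
  shows "(\<Sum>k\<in>UNIV. f k) = f None + (\<Sum>j\<in>UNIV. f (Some j))"
proof -
  have "(\<Sum>k\<in>UNIV. f k) = (\<Sum>k\<in>insert None (range Some). f k)"
    by (simp add: UNIV_option_conv[symmetric])
  also have "\<dots> = f None + (\<Sum>k\<in>range Some. f k)"
    by (subst sum.insert) auto
  also have "(\<Sum>k\<in>range Some. f k) = (\<Sum>j\<in>UNIV. f (Some j))"
    by (subst sum.reindex) (auto simp: inj_on_def)
  finally show ?thesis .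
qed

lemma prod_option_split:
  fixes f :: "'n::finite option \<Rightarrow> 'b::comm_monoid_mult"
  shows "(\<Prod>k\<in>UNIV. f k) = f None * (\<Prod>j\<in>UNIV. f (Some j))"
proof -
  have "(\<Prod>k\<in>UNIV. f k) = (\<Prod>k\<in>insert None (range Some). f k)"
    by (simp add: UNIV_option_conv[symmetric])
  also have "\<dots> = f None * (\<Prod>k\<in>range Some. f k)"
    by (subst prod.insert) auto
  also have "(\<Prod>k\<in>range Some. f k) = (\<Prod>j\<in>UNIV. f (Some j))"
    by (subst prod.reindex) (auto simp: inj_on_def)
  finally show ?thesis .
qed

lemma cpow_nonneg: "0 \<le> x \<Longrightarrow> 0 \<le> cpow x e"
  by (simp add: cpow_def)

lemma cpow_pos: "0 < x \<Longrightarrow> 0 < cpow x e"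
  by (simp add: cpow_def)

lemma cpow_zero: "e \<noteq> 0 \<Longrightarrow> cpow 0 e = 0"
  by (simp add: cpow_def)

lemma cpow_mult: "cpow (c * x) e = cpow c e * cpow x e"
  by (simp add: cpow_def powr_mult)

lemma cpow_pos_powr: "0 < c \<Longrightarrow> cpow c e = c powr e"
  by (simp add: cpow_def)

lemma prod_cpow_scale:
  "(\<Prod>j\<in>A. cpow (c j * z j) (e j)) = (\<Prod>j\<in>A. cpow (c j) (e j)) * (\<Prod>j\<in>A. cpow (z j) (e j))"
  by (simp add: cpow_mult prod.distrib)

lemma amgm:
  fixes \<alpha> z :: "'k \<Rightarrow> real"
  assumes fin: "finite K" and an: "\<And>k. k \<in> K \<Longrightarrow> 0 \<le> \<alpha> k"
    and zn: "\<And>k. k \<in> K \<Longrightarrow> 0 \<le> z k" and S1: "sum \<alpha> K \<le> 1"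
  shows "(\<Prod>k\<in>K. cpow (z k) (\<alpha> k)) \<le> (\<Sum>k\<in>K. \<alpha> k * z k) + (1 - sum \<alpha> K)"
proof (cases "\<exists>k\<in>K. \<alpha> k \<noteq> 0 \<and> z k = 0")
  case True
  then obtain k where k: "k \<in> K" "\<alpha> k \<noteq> 0" "z k = 0" by blast
  have "(\<Prod>k\<in>K. cpow (z k) (\<alpha> k)) = 0"
    using k fin by (intro prod_zero) (auto intro!: bexI[of _ k] simp: cpow_zero)
  moreover have "0 \<le> (\<Sum>k\<in>K. \<alpha> k * z k)" using an zn by (intro sum_nonneg) auto
  ultimately show ?thesis using S1 by linarith
next
  case False
  define S where "S = sum \<alpha> K"
  define M where "M = (\<Sum>k\<in>K. \<alpha> k * z k) + (1 - S)"
  have sz: "0 \<le> (\<Sum>k\<in>K. \<alpha> k * z k)" using an zn by (intro sum_nonneg) auto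
  have Mpos: "0 < M"
  proof (cases "S < 1")
    case True then show ?thesis using sz unfolding M_def by linarith
  next
    case False
    then have "S = 1" using S1 S_def by linarith
    then have "\<exists>k\<in>K. \<alpha> k \<noteq> 0" unfolding S_def by (metis sum.neutral zero_neq_one)
    then obtain k where k: "k \<in> K" "\<alpha> k \<noteq> 0" by blast
    then have zk: "0 < z k" using \<open>\<not> (\<exists>k\<in>K. \<alpha> k \<noteq> 0 \<and> z k = 0)\<close> zn[of k] by auto
    have "\<alpha> k * z k \<le> (\<Sum>k\<in>K. \<alpha> k * z k)"
      using an zn k fin by (intro member_le_sum) auto
    moreover have "0 < \<alpha> k * z k" using k an[of k] zk by auto
    ultimately show ?thesis unfolding M_def using \<open>S = 1\<close> by linarith
  qed
  define L where "L k = (if \<alpha> k = 0 then 0 else \<alpha> k * ln (z k))" for k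
  have fac: "cpow (z k) (\<alpha> k) = exp (L k)" if "k \<in> K" for k
    using False that zn[of k] by (auto simp: cpow_def L_def powr_def)
  have Lle: "L k \<le> \<alpha> k * (z k / M - 1) + \<alpha> k * ln M" if "k \<in> K" for k
  proof (cases "\<alpha> k = 0")
    case True then show ?thesis by (simp add: L_def)
  next
    case nz: False
    then have zk: "0 < z k" using False that zn[of k] by auto
    have "ln (z k / M) \<le> z k / M - 1" using zk Mpos by (intro ln_le_minus_one) auto
    moreover have "ln (z k / M) = ln (z k) - ln M" using zk Mpos by (simp add: ln_div)
    ultimately have "ln (z k) \<le> z k / M - 1 + ln M" by linarith
    then have "\<alpha> k * ln (z k) \<le> \<alpha> k * (z k / M - 1 + ln M)"
      using an[OF that] by (intro mult_left_mono) auto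
    then show ?thesis using nz by (simp add: L_def algebra_simps)
  qed
  have "sum L K \<le> (\<Sum>k\<in>K. \<alpha> k * (z k / M - 1) + \<alpha> k * ln M)"
    using Lle by (intro sum_mono) auto
  also have "\<dots> = (\<Sum>k\<in>K. \<alpha> k * z k) / M - S + S * ln M"
    by (simp add: sum.distrib algebra_simps sum_distrib_left sum_distrib_right sum_divide_distrib S_def sum_subtractf)
  finally have sL: "sum L K \<le> (\<Sum>k\<in>K. \<alpha> k * z k) / M - S + S * ln M" .
  have l2: "ln (1 / M) \<le> 1 / M - 1" using Mpos by (intro ln_le_minus_one) auto
  have "ln (1/M) = - ln M" using Mpos by (simp add: ln_div)
  with l2 have l3: "(1 - S) * (- ln M) \<le> (1 - S) * (1 / M - 1)"
    using S1 S_def by (intro mult_left_mono) auto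
  have "(\<Sum>k\<in>K. \<alpha> k * z k) / M = (M - (1 - S)) / M" unfolding M_def by simp
  also have "\<dots> = 1 - (1 - S) / M" using Mpos by (simp add: field_simps)
  finally have e1: "(\<Sum>k\<in>K. \<alpha> k * z k) / M = 1 - (1 - S) / M" .
  have "sum L K \<le> ln M"
    using sL e1 l3 by (simp add: algebra_simps)
  then have "exp (sum L K) \<le> M" using Mpos
    by (metis exp_le_cancel_iff exp_ln)
  moreover have "(\<Prod>k\<in>K. cpow (z k) (\<alpha> k)) = exp (sum L K)"
    using fac fin by (simp add: exp_sum)
  ultimately show ?thesis unfolding M_def S_def by simp
qed



locale econ =
  fixes a0 :: "'n::finite \<Rightarrow> real" and a :: "'n \<Rightarrow> 'n option \<Rightarrow> real" and lam :: "'n \<Rightarrow> real"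
  assumes a0_pos: "\<And>j. 0 < a0 j" and a0_sum: "(\<Sum>j\<in>UNIV. a0 j) = 1"
    and a_nn: "\<And>i k. 0 \<le> a i k" and a_lab: "\<And>i. 0 < a i None"
    and a_sum: "\<And>i. (\<Sum>k\<in>UNIV. a i k) \<le> 1" and lam_pos: "\<And>i. 0 < lam i"
begin

definition Bop :: "('n \<Rightarrow> real) \<Rightarrow> 'n \<Rightarrow> real" where
  "Bop w j = a0 j * (\<Sum>i\<in>UNIV. eps a i * w i) + (\<Sum>i\<in>UNIV. a i (Some j) * w i)"

lemma eps_nn: "0 \<le> eps a i" using a_sum[of i] by (simp add: eps_def)

lemma sA: "(\<Sum>j\<in>UNIV. a i (Some j)) = 1 - a i None - eps a i"
  using sum_option_split[of "a i"] by (simp add: eps_def)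

lemma Bop_sum: "(\<Sum>j\<in>UNIV. Bop n j) = (\<Sum>i\<in>UNIV. (1 - a i None) * n i)"
proof -
  define E where "E = (\<Sum>i\<in>UNIV. eps a i * n i)"
  have "(\<Sum>j\<in>UNIV. Bop n j) = (\<Sum>j\<in>UNIV. a0 j * E) + (\<Sum>j\<in>UNIV. \<Sum>i\<in>UNIV. a i (Some j) * n i)"
    unfolding Bop_def E_def by (simp only: sum.distrib)
  also have "(\<Sum>j\<in>UNIV. a0 j * E) = E" by (simp add: sum_distrib_right[symmetric] a0_sum)
  also have "(\<Sum>j\<in>UNIV. \<Sum>i\<in>UNIV. a i (Some j) * n i) = (\<Sum>i\<in>UNIV. \<Sum>j\<in>UNIV. a i (Some j) * n i)"
    by (rule sum.swap)
  also have "\<dots> = (\<Sum>i\<in>UNIV. (1 - a i None - eps a i) * n i)"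
    by (simp only: sum_distrib_right[symmetric] sA)
  also have "E + \<dots> = (\<Sum>i\<in>UNIV. (1 - a i None) * n i)"
    unfolding E_def by (simp only: sum.distrib[symmetric]) (simp add: algebra_simps)
  finally show ?thesis .
qed

lemma Bop_mono: "(\<And>i. n i \<le> w i) \<Longrightarrow> Bop n j \<le> Bop w j"
  unfolding Bop_def
  by (intro add_mono mult_left_mono sum_mono) (auto intro: less_imp_le[OF a0_pos] eps_nn a_nn mult_left_mono)

lemma Bop_nonpos: "(\<And>i. n i \<le> 0) \<Longrightarrow> Bop n j \<le> 0"
  using Bop_mono[of n "\<lambda>_. 0" j] by (simp add: Bop_def)

lemma Bop_nonneg: "(\<And>i. 0 \<le> n i) \<Longrightarrow> 0 \<le> Bop n j"
  using Bop_mono[of "\<lambda>_. 0" n j] by (simp add: Bop_def)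

lemma nonneg_sol:
  assumes eq: "\<And>j. w j = c j + Bop w j" and c: "\<And>j. 0 \<le> c j"
  shows "0 \<le> w j"
proof -
  define n where "n i = min (w i) 0" for i
  have nle: "n i \<le> w i" "n i \<le> 0" for i by (auto simp: n_def)
  have key: "Bop n j \<le> n j" for j
  proof -
    have "Bop n j \<le> Bop w j" using nle by (intro Bop_mono) auto
    also have "\<dots> \<le> w j" using eq[of j] c[of j] by linarith
    finally have "Bop n j \<le> w j" .
    moreover have "Bop n j \<le> 0" using nle by (intro Bop_nonpos) auto
    ultimately show ?thesis by (simp add: n_def)
  qed
  have "(\<Sum>j\<in>UNIV. Bop n j) \<le> (\<Sum>j\<in>UNIV. n j)" using key by (intro sum_mono) auto
  then have "(\<Sum>i\<in>UNIV. (1 - a i None) * n i) \<le> (\<Sum>i\<in>UNIV. n i)" by (simp add: Bop_sum)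
  then have s0: "0 \<le> (\<Sum>i\<in>UNIV. a i None * n i)"
    by (simp add: algebra_simps sum_subtractf)
  have t0: "a i None * n i \<le> 0" for i using a_lab[of i] nle(2)[of i] by (simp add: mult_nonneg_nonpos)
  have "(\<Sum>i\<in>UNIV. a i None * n i) = 0"
    using s0 t0 by (meson antisym sum_nonpos)
  then have "(\<Sum>i\<in>UNIV. - (a i None * n i)) = 0" by (simp add: sum_negf)
  then have "- (a j None * n j) = 0" using t0 sum_nonneg_eq_0_iff[of UNIV "\<lambda>i. - (a i None * n i)"] by auto
  then have "n j = 0" using a_lab[of j] by simp
  then show ?thesis by (simp add: n_def)
qed

lemma Bop_diff: "Bop (\<lambda>i. w i - w' i) j = Bop w j - Bop w' j"
  unfolding Bop_def by (simp add: algebra_simps sum_subtractf)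

lemma Bop_uminus: "Bop (\<lambda>i. - w i) j = - Bop w j"
  unfolding Bop_def by (simp add: algebra_simps sum_negf)

lemma Bop_kernel: assumes "\<And>j. w j = Bop w j" shows "w = (\<lambda>_. 0)"
proof
  fix j
  have e1: "w j = 0 + Bop w j" for j using assms[of j] by linarith
  have e2: "- w j = 0 + Bop (\<lambda>i. - w i) j" for j unfolding Bop_uminus using assms[of j] by linarith
  have "0 \<le> w j" using nonneg_sol[of w "\<lambda>_. 0", OF e1] by auto
  moreover have "0 \<le> - w j" using nonneg_sol[of "\<lambda>i. - w i" "\<lambda>_. 0", OF e2] by auto
  ultimately show "w j = 0" by simp
qed

lemma sol_unique:
  assumes "\<And>j. w j = a0 j + Bop w j" "\<And>j. w' j = a0 j + Bop w' j"
  shows "w = w'"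
proof -
  have "(\<lambda>i. w i - w' i) = (\<lambda>_. 0)"
  proof (rule Bop_kernel)
    fix j show "w j - w' j = Bop (\<lambda>i. w i - w' i) j"
      unfolding Bop_diff using assms(1)[of j] assms(2)[of j] by linarith
  qed
  then show ?thesis by (auto simp: fun_eq_iff)
qed

lemma sol_exists: "\<exists>w. \<forall>j. w j = a0 j + Bop w j"
proof -
  define L :: "real^'n \<Rightarrow> real^'n" where "L v = (\<chi> j. v$j - Bop (\<lambda>i. v$i) j)" for v
  have lin: "linear L"
    by (rule linearI) (auto simp: L_def Bop_def vec_eq_iff algebra_simps sum.distrib sum_distrib_left)
  have "inj L"
  proof (subst linear_injective_0[OF lin], intro allI impI)
    fix v assume "L v = 0"
    then have "\<forall>j. (L v)$j = 0" by simp
    then have h: "\<forall>j. v$j - Bop (\<lambda>i. v$i) j = 0" by (simp only: L_def vec_lambda_beta) simp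
    have "v$j = Bop (\<lambda>i. v$i) j" for j using h[rule_format, of j] by linarith
    then have "(\<lambda>i. v$i) = (\<lambda>_. 0)" by (intro Bop_kernel) blast
    then show "v = 0" by (simp add: vec_eq_iff fun_eq_iff)
  qed
  then have "surj L" using linear_injective_imp_surjective[OF lin] by auto
  then obtain v where "L v = (\<chi> j. a0 j)" by (metis surjD)
  then have h: "\<forall>j. v$j - Bop (\<lambda>i. v$i) j = a0 j" by (auto simp: L_def vec_eq_iff)
  have "\<forall>j. v$j = a0 j + Bop (\<lambda>i. v$i) j"
  proof
    fix j show "v$j = a0 j + Bop (\<lambda>i. v$i) j" using h[rule_format, of j] by linarith
  qed
  then show ?thesis by blast
qed

lemma sol_pos: assumes "\<And>j. w j = a0 j + Bop w j" shows "0 < w j"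
proof -
  have "\<And>i. 0 \<le> w i" using nonneg_sol[of w a0] assms a0_pos less_imp_le by blast
  then have "0 \<le> Bop w j" by (rule Bop_nonneg)
  then show ?thesis using assms[of j] a0_pos[of j] by linarith
qed

lemma sol_labor: assumes "\<And>j. w j = a0 j + Bop w j" shows "(\<Sum>i\<in>UNIV. a i None * w i) = 1"
proof -
  have "(\<Sum>j\<in>UNIV. w j) = (\<Sum>j\<in>UNIV. a0 j) + (\<Sum>j\<in>UNIV. Bop w j)"
    by (subst assms) (simp add: sum.distrib)
  then have "(\<Sum>j\<in>UNIV. w j) = 1 + (\<Sum>i\<in>UNIV. (1 - a i None) * w i)"
    by (simp add: a0_sum Bop_sum)
  then show ?thesis by (simp add: algebra_simps sum_subtractf)
qed

definition MI :: "real^'n^'n" where "MI = shareA a - mat 1"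

lemma MI_apply: "(MI *v z)$i = (\<Sum>j\<in>UNIV. a i (Some j) * z$j) - z$i"
proof -
  have "(MI *v z)$i = (\<Sum>j\<in>UNIV. a i (Some j) * z$j - (if i = j then z$j else 0))"
    by (simp add: MI_def matrix_vector_mult_def shareA_def mat_def left_diff_distrib) (intro sum.cong, auto)
  also have "\<dots> = (\<Sum>j\<in>UNIV. a i (Some j) * z$j) - z$i"
    by (simp add: sum_subtractf)
  finally show ?thesis .
qed

lemma MI_inj: "inj ((*v) MI)"
proof (subst linear_injective_0[OF matrix_vector_mul_linear], intro allI impI)
  fix z :: "real^'n" assume z0: "MI *v z = 0"
  define m where "m = Max (range (\<lambda>j. \<bar>z$j\<bar>))"
  have mge: "\<bar>z$j\<bar> \<le> m" for j unfolding m_def by (rule Max_ge) auto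
  have "m \<in> range (\<lambda>j. \<bar>z$j\<bar>)" unfolding m_def by (rule Max_in) auto
  then obtain i where i: "\<bar>z$i\<bar> = m" by auto
  have "z$i = (\<Sum>j\<in>UNIV. a i (Some j) * z$j)" using MI_apply[of z i] z0 by simp
  then have "\<bar>z$i\<bar> \<le> (\<Sum>j\<in>UNIV. \<bar>a i (Some j) * z$j\<bar>)" by (metis sum_abs)
  also have "\<dots> \<le> (\<Sum>j\<in>UNIV. a i (Some j) * m)"
    using mge a_nn by (intro sum_mono) (auto simp: abs_mult intro: mult_left_mono)
  also have "\<dots> = (1 - a i None - eps a i) * m" by (simp add: sum_distrib_right[symmetric] sA)
  finally have "m \<le> (1 - a i None - eps a i) * m" using i by simp
  then have "(a i None + eps a i) * m \<le> 0" by (simp add: algebra_simps)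
  moreover have "0 \<le> m" using i by auto
  moreover have "0 < a i None + eps a i" using a_lab[of i] eps_nn[of i] by linarith
  ultimately have "m = 0" by (simp add: mult_le_0_iff)
  then show "z = 0" using mge by (simp add: vec_eq_iff)
qed

lemma MI_invertible: "invertible MI"
  using MI_inj invertible_left_inverse matrix_left_invertible_injective by blast

lemma MI_inv: "matrix_inv MI ** MI = mat 1" "MI ** matrix_inv MI = mat 1"
proof -
  have "\<exists>A'. MI ** A' = mat 1 \<and> A' ** MI = mat 1" using MI_invertible by (simp add: invertible_def)
  then have "MI ** matrix_inv MI = mat 1 \<and> matrix_inv MI ** MI = mat 1"
    unfolding matrix_inv_def by (rule someI_ex)
  then show "matrix_inv MI ** MI = mat 1" "MI ** matrix_inv MI = mat 1" by auto
qed

lemma MI_solve: "MI *v z = r \<longleftrightarrow> z = matrix_inv MI *v r"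
proof
  assume "MI *v z = r"
  then show "z = matrix_inv MI *v r"
    by (metis MI_inv(1) matrix_vector_mul_assoc matrix_vector_mul_lid)
next
  assume "z = matrix_inv MI *v r"
  then show "MI *v z = r" by (simp add: matrix_vector_mul_assoc MI_inv(2))
qed

end


context econ begin

abbreviation GE where "GE p x y \<equiv> general_equilibrium a0 lam a p x y"

lemma GE_D:
  assumes "GE p x y"
  shows GE_pnn: "0 \<le> p g" and GE_y0: "y None = 1" and GE_xnn: "0 \<le> x (Some i) k"
  and GE_y: "y (Some i) = prodfun lam a i (x (Some i))"
  and GE_x0nn: "0 \<le> x None k" and GE_budget: "dotp p (x None) \<le> income p x y"
  and GE_hhopt: "nonneg x0 \<Longrightarrow> dotp p x0 \<le> income p x y \<Longrightarrow> utility a0 x0 \<le> utility a0 (x None)"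
  and GE_mc: "(\<Sum>j\<in>UNIV. x j g) = y g"
  using assms unfolding general_equilibrium_def nonneg_def by auto

lemma GE_firmopt: assumes "GE p x y"
  shows "nonneg xi \<Longrightarrow> profit p i (prodfun lam a i xi) xi \<le> profit p i (y (Some i)) (x (Some i))"
  using assms unfolding general_equilibrium_def by blast

lemma cpow_one: "cpow 1 e = 1" by (simp add: cpow_def)

lemma prod_zero_at: "f k = 0 \<Longrightarrow> (\<Prod>m\<in>(UNIV::'k::finite set). f m) = (0::real)"
  by (rule prod_zero) auto

lemma prodfun_zero: "xi k = 0 \<Longrightarrow> a i k \<noteq> 0 \<Longrightarrow> prodfun lam a i xi = 0"
  unfolding prodfun_def by (subst prod_zero_at[of _ k]) (auto simp: cpow_zero)

lemma profit_zero: "profit p i (prodfun lam a i (\<lambda>_. 0)) (\<lambda>_. 0) = 0"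
  using prodfun_zero[of "\<lambda>_. 0" None i] a_lab[of i] by (simp add: profit_def dotp_def)

lemma GE_profit_nn: assumes "GE p x y" shows "0 \<le> profit p i (y (Some i)) (x (Some i))"
  using GE_firmopt[OF assms, of "\<lambda>_. 0" i] profit_zero by (simp add: nonneg_def)

lemma GE_income_ge: assumes "GE p x y" shows "p None \<le> income p x y"
  unfolding income_def using GE_profit_nn[OF assms] by (simp add: sum_nonneg)

lemma GE_p0: assumes GE: "GE p x y" shows "0 < p None"
proof (rule ccontr)
  assume "\<not> 0 < p None"
  then have p0: "p None = 0" using GE_pnn[OF GE, of None] by simp
  have pz: "p (Some j) = 0" for j
  proof (rule ccontr)
    assume "p (Some j) \<noteq> 0"
    then have pj: "0 < p (Some j)" using GE_pnn[OF GE, of "Some j"] by simp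
    define \<pi> where "\<pi> = profit p j (y (Some j)) (x (Some j))"
    define C where "C = (\<Sum>k\<in>UNIV. p (Some k))"
    have \<pi>0: "0 \<le> \<pi>" unfolding \<pi>_def by (rule GE_profit_nn[OF GE])
    have C0: "0 \<le> C" unfolding C_def using GE_pnn[OF GE] by (simp add: sum_nonneg)
    define \<beta> where "\<beta> = (\<pi> + C + 1) / (p (Some j) * lam j)"
    have \<beta>0: "0 < \<beta>" unfolding \<beta>_def using \<pi>0 C0 pj lam_pos[of j] by simp
    define T where "T = \<beta> powr (1 / a j None)"
    have T0: "0 < T" unfolding T_def using \<beta>0 by simp
    have Tp: "T powr (a j None) = \<beta>" unfolding T_def using \<beta>0 a_lab[of j]
      by (simp add: powr_powr)
    define xt where "xt k = (if k = None then T else 1)" for k :: "'n option"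
    have "prodfun lam a j xt = lam j * T powr (a j None)"
      unfolding prodfun_def prod_option_split xt_def using T0 by (simp add: cpow_one cpow_pos_powr)
    moreover have "dotp p xt = C"
      unfolding dotp_def sum_option_split xt_def C_def by (simp add: p0)
    ultimately have "profit p j (prodfun lam a j xt) xt = p (Some j) * lam j * \<beta> - C"
      unfolding profit_def Tp by simp
    also have "\<dots> = \<pi> + 1" unfolding \<beta>_def using pj lam_pos[of j] by simp
    finally have e: "profit p j (prodfun lam a j xt) xt = \<pi> + 1" .
    have nn: "nonneg xt" using T0 by (auto simp: nonneg_def xt_def)
    have "profit p j (prodfun lam a j xt) xt \<le> \<pi>" unfolding \<pi>_def by (rule GE_firmopt[OF GE nn])
    then show False using e by simp
  qed
  have pall: "p = (\<lambda>_. 0)"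
  proof
    fix g show "p g = 0" using p0 pz by (cases g) auto
  qed
  have inc: "income p x y = 0" unfolding income_def profit_def dotp_def pall by simp
  define x' where "x' k = x None k + 1" for k
  have "utility a0 x' \<le> utility a0 (x None)"
    using GE_hhopt[OF GE, of x'] GE_x0nn[OF GE] inc pall
    by (simp add: x'_def nonneg_def dotp_def add_nonneg_pos)
  moreover have "utility a0 (x None) < utility a0 x'"
    unfolding utility_def
  proof (rule prod_mono_strict[of undefined])
    fix k :: 'n
    have xk: "0 \<le> x None (Some k)" by (rule GE_x0nn[OF GE])
    show "cpow (x None (Some k)) (a0 k) < cpow (x' (Some k)) (a0 k)"
      using a0_pos[of k] xk by (simp add: cpow_def x'_def powr_less_mono2)
    then show "0 \<le> cpow (x None (Some k)) (a0 k) \<and> cpow (x None (Some k)) (a0 k) \<le> cpow (x' (Some k)) (a0 k)"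
      using xk by (simp add: cpow_nonneg)
    show "0 < cpow (x' (Some k)) (a0 k)" using xk by (simp add: x'_def cpow_pos)
  qed auto
  ultimately show False by simp
qed

lemma GE_income_pos: assumes "GE p x y" shows "0 < income p x y"
  using GE_p0[OF assms] GE_income_ge[OF assms] by linarith

lemma GE_U_pos: assumes GE: "GE p x y" shows "0 < utility a0 (x None)"
proof -
  define I where "I = income p x y"
  define P where "P = (\<Sum>k\<in>UNIV. p (Some k))"
  have P0: "0 \<le> P" unfolding P_def using GE_pnn[OF GE] by (simp add: sum_nonneg)
  have I0: "0 < I" unfolding I_def by (rule GE_income_pos[OF GE])
  define c where "c = I / (1 + P)"
  have c0: "0 < c" unfolding c_def using I0 P0 by simp
  define xt where "xt k = (case k of None \<Rightarrow> 0 | Some _ \<Rightarrow> c)" for k :: "'n option"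
  have "dotp p xt = c * P" unfolding dotp_def sum_option_split xt_def P_def
    by (simp add: sum_distrib_left mult.commute)
  also have "\<dots> \<le> c * (1 + P)" using c0 by simp
  also have "\<dots> = I" unfolding c_def using P0 by simp
  finally have "utility a0 xt \<le> utility a0 (x None)"
    using GE_hhopt[OF GE, of xt] c0 unfolding I_def by (auto simp: nonneg_def xt_def split: option.split)
  moreover have "0 < utility a0 xt" unfolding utility_def xt_def using c0
    by (simp add: prod_pos cpow_pos)
  ultimately show ?thesis by simp
qed

lemma GE_x0pos: assumes GE: "GE p x y" shows "0 < x None (Some k)"
proof (rule ccontr)
  assume "\<not> 0 < x None (Some k)"
  then have "x None (Some k) = 0" using GE_x0nn[OF GE, of "Some k"] by simp
  then have "utility a0 (x None) = 0" unfolding utility_def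
    using a0_pos[of k] by (subst prod_zero_at[of _ k]) (auto simp: cpow_zero)
  then show False using GE_U_pos[OF GE] by simp
qed

lemma GE_pgood: assumes GE: "GE p x y" shows "0 < p (Some j)"
proof (rule ccontr)
  assume "\<not> 0 < p (Some j)"
  then have pj: "p (Some j) = 0" using GE_pnn[OF GE, of "Some j"] by simp
  define x' where "x' = (x None)(Some j := x None (Some j) + 1)"
  have "dotp p x' = dotp p (x None)" unfolding dotp_def
    by (intro sum.cong) (auto simp: x'_def pj)
  then have "utility a0 x' \<le> utility a0 (x None)"
    using GE_hhopt[OF GE, of x'] GE_budget[OF GE] GE_x0nn[OF GE]
    by (simp add: x'_def nonneg_def add_nonneg_pos)
  moreover have "utility a0 (x None) < utility a0 x'"
    unfolding utility_def
  proof (rule prod_mono_strict[of j])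
    show "cpow (x None (Some j)) (a0 j) < cpow (x' (Some j)) (a0 j)"
      using a0_pos[of j] GE_x0pos[OF GE, of j] by (simp add: cpow_def x'_def powr_less_mono2)
    fix k :: 'n
    have xk: "0 < x None (Some k)" by (rule GE_x0pos[OF GE])
    show "0 \<le> cpow (x None (Some k)) (a0 k) \<and> cpow (x None (Some k)) (a0 k) \<le> cpow (x' (Some k)) (a0 k)"
      using xk a0_pos[of k] by (auto simp: cpow_def x'_def powr_mono2)
    show "0 < cpow (x' (Some k)) (a0 k)" using xk by (auto simp: x'_def intro!: cpow_pos)
  qed auto
  ultimately show False by simp
qed

lemma GE_ppos: assumes GE: "GE p x y" shows "0 < p g"
  using GE_p0[OF GE] GE_pgood[OF GE] by (cases g) auto

end


context econ begin

lemma GE_household: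
  assumes GE: "GE p x y"
  shows "x None None = 0 \<and> p (Some j) * x None (Some j) = a0 j * income p x y"
proof -
  define I where "I = income p x y"
  define U where "U = utility a0 (x None)"
  define e where "e k = p (Some k) * x None (Some k)" for k
  define S where "S = (\<Sum>k\<in>UNIV. e k)"
  have e0: "0 < e k" for k unfolding e_def using GE_ppos[OF GE] GE_x0pos[OF GE] by simp
  have U0: "0 < U" unfolding U_def by (rule GE_U_pos[OF GE])
  have I0: "0 < I" unfolding I_def by (rule GE_income_pos[OF GE])
  have S0: "0 < S" unfolding S_def using e0 by (intro sum_pos) auto
  have dot: "dotp p (x None) = p None * x None None + S"
    unfolding dotp_def sum_option_split S_def e_def by simp
  have scale_util: "utility a0 (\<lambda>k. case k of None \<Rightarrow> 0 | Some m \<Rightarrow> c m * x None (Some m))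
       = (\<Prod>m\<in>UNIV. cpow (c m) (a0 m)) * U" for c
    unfolding utility_def U_def by (simp add: prod_cpow_scale)
  have dot_scale: "dotp p (\<lambda>k. case k of None \<Rightarrow> 0 | Some m \<Rightarrow> c m * x None (Some m))
       = (\<Sum>m\<in>UNIV. c m * e m)" for c
    unfolding dotp_def sum_option_split e_def by (simp add: algebra_simps)
  have nn_scale: "nonneg (\<lambda>k. case k of None \<Rightarrow> 0 | Some m \<Rightarrow> c m * x None (Some m))"
    if "\<And>m. 0 \<le> c m" for c
    unfolding nonneg_def using that GE_x0nn[OF GE] by (auto split: option.split)
  define r where "r = I / S"
  have r0: "0 < r" unfolding r_def using I0 S0 by simp
  have "(\<Sum>m\<in>UNIV. r * e m) = I" unfolding r_def S_def[symmetric] sum_distrib_left[symmetric]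
    using S0 by simp
  then have "utility a0 (\<lambda>k. case k of None \<Rightarrow> 0 | Some m \<Rightarrow> r * x None (Some m)) \<le> U"
    unfolding U_def using GE_hhopt[OF GE, of "\<lambda>k. case k of None \<Rightarrow> 0 | Some m \<Rightarrow> r * x None (Some m)"]
      dot_scale[of "\<lambda>_. r"] nn_scale[of "\<lambda>_. r"] r0 I_def by simp
  moreover have "(\<Prod>m\<in>UNIV. cpow r (a0 m)) = r"
  proof -
    have "(\<Prod>m\<in>UNIV. cpow r (a0 m)) = (\<Prod>m\<in>UNIV. r powr (a0 m))" using r0 by (simp add: cpow_pos_powr)
    also have "\<dots> = r powr (\<Sum>m\<in>UNIV. a0 m)" using r0 by (simp add: powr_sum)
    finally show ?thesis using r0 by (simp add: a0_sum)
  qed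
  ultimately have "r * U \<le> U" using scale_util[of "\<lambda>_. r"] by simp
  then have "r \<le> 1" using U0 by simp
  then have "I \<le> S" unfolding r_def using S0 by (simp add: divide_le_eq)
  moreover have "0 \<le> p None * x None None" using GE_pnn[OF GE] GE_x0nn[OF GE] by simp
  moreover have "dotp p (x None) \<le> I" unfolding I_def by (rule GE_budget[OF GE])
  ultimately have SI: "S = I" and px0: "p None * x None None = 0" using dot by linarith+
  have x00: "x None None = 0" using px0 GE_ppos[OF GE, of None] by simp
  have "e j = a0 j * I"
  proof (cases "\<forall>k. k = j")
    case True
    then have UN: "(UNIV :: 'n set) = {j}" by auto
    have "a0 j = 1" using a0_sum unfolding UN by simp
    moreover have "S = e j" unfolding S_def UN by simp
    ultimately show ?thesis using SI by simp
  next
    case False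
    then obtain k where kj: "k \<noteq> j" by auto
    have "(\<Sum>m\<in>{j,k}. e m) \<le> S" unfolding S_def using e0
      by (intro sum_mono2) (auto intro: less_imp_le)
    then have "e j + e k \<le> I" using kj SI by simp
    then have ejI: "e j < I" using e0[of k] by linarith
    define D where "D = I - e j"
    have D0: "0 < D" unfolding D_def using ejI by simp
    define \<alpha> where "\<alpha> = a0 j"
    define st where "st t = (I - t * e j) / D" for t
    define d where "d = min 1 (D / e j)"
    have d0: "0 < d" unfolding d_def using D0 e0[of j] by simp
    define h where "h t = \<alpha> * ln t + (1 - \<alpha>) * ln (st t)" for t
    have h1: "h 1 = 0" unfolding h_def st_def D_def using ejI by simp
    have hle: "h t \<le> h 1" if t: "\<bar>1 - t\<bar> < d" for t
    proof -
      have t0: "0 < t" using t d_def by auto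
      have "t < 1 + D / e j" using t d_def by auto
      then have "t * e j < (1 + D / e j) * e j" using e0[of j] by (simp add: mult_strict_right_mono)
      then have "t * e j < I" using e0[of j] unfolding D_def by (simp add: field_simps)
      then have s0: "0 < st t" unfolding st_def using D0 by simp
      define c where "c m = (if m = j then t else st t)" for m
      have c0: "0 < c m" for m unfolding c_def using t0 s0 by simp
      have "(\<Sum>m\<in>UNIV. c m * e m) = (\<Sum>m\<in>UNIV. st t * e m + (if m = j then (t - st t) * e j else 0))"
        by (intro sum.cong) (auto simp: c_def algebra_simps)
      also have "\<dots> = st t * S + (t - st t) * e j"
        by (simp add: sum.distrib sum_distrib_left S_def)
      also have "\<dots> = st t * D + t * e j" unfolding SI D_def by (simp add: algebra_simps)
      also have "\<dots> = I" unfolding st_def using D0 by simp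
      finally have dI: "(\<Sum>m\<in>UNIV. c m * e m) = I" .
      have "utility a0 (\<lambda>k. case k of None \<Rightarrow> 0 | Some m \<Rightarrow> c m * x None (Some m)) \<le> utility a0 (x None)"
      proof (rule GE_hhopt[OF GE])
        show "nonneg (\<lambda>k. case k of None \<Rightarrow> 0 | Some m \<Rightarrow> c m * x None (Some m))"
          using nn_scale[of c] c0 less_imp_le by blast
        show "dotp p (\<lambda>k. case k of None \<Rightarrow> 0 | Some m \<Rightarrow> c m * x None (Some m)) \<le> income p x y"
          unfolding dot_scale dI I_def by simp
      qed
      then have "(\<Prod>m\<in>UNIV. cpow (c m) (a0 m)) * U \<le> U" unfolding scale_util U_def .
      then have P1: "(\<Prod>m\<in>UNIV. cpow (c m) (a0 m)) \<le> 1" using U0 by simp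
      have "(\<Prod>m\<in>UNIV. cpow (c m) (a0 m)) = (\<Prod>m\<in>UNIV. c m powr (a0 m))"
        using c0 by (simp add: cpow_pos_powr)
      also have "\<dots> = c j powr (a0 j) * (\<Prod>m\<in>UNIV - {j}. c m powr (a0 m))"
        by (simp add: prod.remove)
      also have "(\<Prod>m\<in>UNIV - {j}. c m powr (a0 m)) = (\<Prod>m\<in>UNIV - {j}. st t powr (a0 m))"
        by (intro prod.cong) (auto simp: c_def)
      also have "\<dots> = st t powr (\<Sum>m\<in>UNIV - {j}. a0 m)" using s0 by (simp add: powr_sum)
      also have "(\<Sum>m\<in>UNIV - {j}. a0 m) = 1 - \<alpha>"
        using sum.remove[of UNIV j a0] a0_sum unfolding \<alpha>_def by simp
      finally have "t powr \<alpha> * st t powr (1 - \<alpha>) \<le> 1" using P1 unfolding c_def \<alpha>_def by simp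
      then have "ln (t powr \<alpha> * st t powr (1 - \<alpha>)) \<le> ln 1"
        using t0 s0 by (subst ln_le_cancel_iff) auto
      then have "h t \<le> 0" unfolding h_def using t0 s0 by (simp add: ln_mult)
      then show ?thesis using h1 by simp
    qed
    have "DERIV h 1 :> \<alpha> * (1 / 1) + (1 - \<alpha>) * ((- e j / D) / st 1)"
      unfolding h_def st_def using D0 ejI
      by (auto intro!: derivative_eq_intros simp: D_def)
    then have "\<alpha> * (1 / 1) + (1 - \<alpha>) * ((- e j / D) / st 1) = 0"
      using d0 hle by (intro DERIV_local_max[where d = d]) auto
    moreover have "st 1 = 1" unfolding st_def D_def using ejI by simp
    ultimately have "\<alpha> * D = (1 - \<alpha>) * e j" using D0 by (simp add: field_simps)
    then show ?thesis unfolding D_def \<alpha>_def by (simp add: algebra_simps)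
  qed
  then show ?thesis using x00 unfolding e_def I_def by simp
qed

lemma GE_firm:
  assumes GE: "GE p x y"
  shows "p k * x (Some i) k = a i k * (p (Some i) * y (Some i))"
proof (cases "x (Some i) k = 0")
  case True
  show ?thesis
  proof (cases "a i k = 0")
    case False
    then have "y (Some i) = 0" using prodfun_zero[of "x (Some i)" k i, OF True False] GE_y[OF GE] by simp
    then show ?thesis using True by simp
  qed (use True in simp)
next
  case False
  define xi where "xi = x (Some i)"
  have xk: "0 < xi k" using False GE_xnn[OF GE, of i k] unfolding xi_def by simp
  define A where "A = p (Some i) * y (Some i)"
  define B where "B = p k * xi k"
  define \<alpha> where "\<alpha> = a i k"
  define f where "f t = A * t powr \<alpha> - t * B" for t
  have fle: "f t \<le> f 1" if t: "\<bar>1 - t\<bar> < 1" for t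
  proof -
    have t0: "0 < t" using t by auto
    define c where "c m = (if m = k then t else 1)" for m
    define xt where "xt m = c m * xi m" for m
    have "prodfun lam a i xt = (\<Prod>m\<in>UNIV. cpow (c m) (a i m)) * prodfun lam a i xi"
      unfolding prodfun_def xt_def prod_cpow_scale by simp
    also have "(\<Prod>m\<in>UNIV. cpow (c m) (a i m)) = (\<Prod>m\<in>UNIV. if m = k then cpow t (a i m) else 1)"
      by (intro prod.cong) (auto simp: c_def cpow_one)
    also have "\<dots> = t powr \<alpha>" using t0 by (simp add: cpow_pos_powr \<alpha>_def)
    finally have pf: "prodfun lam a i xt = t powr \<alpha> * y (Some i)" using GE_y[OF GE] xi_def by simp
    have "dotp p xt = (\<Sum>m\<in>UNIV. p m * xi m + (if m = k then (t - 1) * B else 0))"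
      unfolding dotp_def xt_def by (intro sum.cong) (auto simp: c_def B_def algebra_simps)
    also have "\<dots> = dotp p xi + (t - 1) * B" by (simp add: sum.distrib dotp_def)
    finally have dt: "dotp p xt = dotp p xi + (t - 1) * B" .
    have nn: "nonneg xt" unfolding nonneg_def xt_def c_def using t0 GE_xnn[OF GE] xi_def
      by (auto intro: mult_nonneg_nonneg)
    have "profit p i (prodfun lam a i xt) xt \<le> profit p i (y (Some i)) xi"
      using GE_firmopt[OF GE nn] xi_def by simp
    then have "p (Some i) * (t powr \<alpha> * y (Some i)) - (dotp p xi + (t - 1) * B) \<le> A - dotp p xi"
      unfolding profit_def pf dt A_def .
    then show ?thesis unfolding f_def A_def by (simp add: algebra_simps)
  qed
  have "DERIV f 1 :> A * (\<alpha> * 1 powr (\<alpha> - 1)) - 1 * B"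
    unfolding f_def by (auto intro!: derivative_eq_intros)
  then have "A * (\<alpha> * 1 powr (\<alpha> - 1)) - 1 * B = 0"
    using fle by (intro DERIV_local_max[where d = 1]) auto
  then show ?thesis unfolding A_def B_def \<alpha>_def xi_def by (simp add: algebra_simps)
qed

lemma dotp_scale: "dotp (\<lambda>g. c * p g) z = c * dotp p z"
  unfolding dotp_def by (simp add: sum_distrib_left algebra_simps)

lemma profit_scale: "profit (\<lambda>g. c * p g) i yi xi = c * profit p i yi xi"
  unfolding profit_def dotp_scale by (simp add: algebra_simps)

lemma income_scale: "income (\<lambda>g. c * p g) x y = c * income p x y"
  unfolding income_def profit_scale by (simp add: sum_distrib_left algebra_simps)

lemma GE_scale: assumes GE: "GE p x y" and c: "0 < c" shows "GE (\<lambda>g. c * p g) x y"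
proof -
  have "\<forall>k. 0 \<le> c * p k" using GE_pnn[OF GE] c by simp
  then show ?thesis
    using GE unfolding general_equilibrium_def profit_scale dotp_scale income_scale
      mult_le_cancel_left_pos[OF c] nonneg_def by blast
qed

end


context econ begin

definition uvec :: "real^'n" where "uvec = (\<chi> i. ln (lam i) + (\<Sum>j\<in>UNIV. xlogx (a i j)))"
definition Dm :: "real^'n^'n" where "Dm = (\<chi> i k. if i = k then (\<Sum>j\<in>UNIV. a i j) - 1 else 0)"

lemma Dm_apply: "(Dm *v z)$i = ((\<Sum>j\<in>UNIV. a i j) - 1) * z$i"
proof -
  have "(Dm *v z)$i = (\<Sum>k\<in>UNIV. (if i = k then (\<Sum>j\<in>UNIV. a i j) - 1 else 0) * z$k)"
    by (simp add: Dm_def matrix_vector_mult_def)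
  also have "\<dots> = (\<Sum>k\<in>UNIV. if i = k then ((\<Sum>j\<in>UNIV. a i j) - 1) * z$k else 0)"
    by (intro sum.cong) auto
  finally show ?thesis by simp
qed

lemma ln_prodfun:
  assumes w0: "0 < w" and q: "\<And>k. 0 < q k"
  shows "0 < prodfun lam a i (\<lambda>k. a i k * w / q k)"
    and "ln (prodfun lam a i (\<lambda>k. a i k * w / q k)) = ln (lam i) + (\<Sum>k\<in>UNIV. xlogx (a i k))
           + (\<Sum>k\<in>UNIV. a i k) * ln w - (\<Sum>k\<in>UNIV. a i k * ln (q k))"
proof -
  have fpos: "0 < cpow (a i k * w / q k) (a i k)" for k
  proof (cases "a i k = 0")
    case False
    then have "0 < a i k" using a_nn[of i k] by simp
    then show ?thesis using w0 q[of k] by (intro cpow_pos) simp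
  qed (simp add: cpow_def)
  have fln: "ln (cpow (a i k * w / q k) (a i k)) = xlogx (a i k) + a i k * ln w - a i k * ln (q k)" for k
  proof (cases "a i k = 0")
    case False
    then have ak: "0 < a i k" using a_nn[of i k] by simp
    have "ln (cpow (a i k * w / q k) (a i k)) = a i k * ln (a i k * w / q k)"
      using False by (simp add: cpow_def)
    also have "\<dots> = a i k * (ln (a i k) + ln w - ln (q k))"
      using ak w0 q[of k] by (simp add: ln_div ln_mult)
    finally show ?thesis using False by (simp add: xlogx_def algebra_simps)
  qed (simp add: cpow_def xlogx_def)
  show "0 < prodfun lam a i (\<lambda>k. a i k * w / q k)"
    unfolding prodfun_def using lam_pos[of i] fpos by (simp add: prod_pos)
  have "ln (prodfun lam a i (\<lambda>k. a i k * w / q k)) = ln (lam i) + (\<Sum>k\<in>UNIV. ln (cpow (a i k * w / q k) (a i k)))"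
    unfolding prodfun_def using lam_pos[of i] fpos
    by (simp add: ln_mult prod_pos ln_prod less_imp_neq[symmetric])
  also have "\<dots> = ln (lam i) + (\<Sum>k\<in>UNIV. xlogx (a i k)) + (\<Sum>k\<in>UNIV. a i k) * ln w - (\<Sum>k\<in>UNIV. a i k * ln (q k))"
    unfolding fln by (simp add: sum.distrib sum_subtractf sum_distrib_right)
  finally show "ln (prodfun lam a i (\<lambda>k. a i k * w / q k)) = ln (lam i) + (\<Sum>k\<in>UNIV. xlogx (a i k))
           + (\<Sum>k\<in>UNIV. a i k) * ln w - (\<Sum>k\<in>UNIV. a i k * ln (q k))" .
qed

lemma GE_char:
  assumes GE: "GE p x y" and p0: "p None = 1"
  defines "v \<equiv> (\<lambda>i. p (Some i) * y (Some i))"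
  shows "\<And>i. profit p i (y (Some i)) (x (Some i)) = eps a i * v i"
    and "income p x y = 1 + (\<Sum>i\<in>UNIV. eps a i * v i)"
    and "\<And>j. v j = a0 j + Bop v j"
    and "\<And>i k. x (Some i) k = a i k * v i / p k"
    and "x None None = 0"
    and "\<And>k. x None (Some k) = a0 k * income p x y / p (Some k)"
    and "\<And>i. y (Some i) = v i / p (Some i)"
    and "MI *v (\<chi> i. ln (p (Some i))) = uvec + Dm *v (\<chi> i. ln (v i))"
proof -
  have pp: "0 < p g" for g by (rule GE_ppos[OF GE])
  have firm: "p k * x (Some i) k = a i k * v i" for i k unfolding v_def by (rule GE_firm[OF GE])
  show xf: "x (Some i) k = a i k * v i / p k" for i k using firm[of k i] pp[of k]
    by (simp add: field_simps)
  show pr: "profit p i (y (Some i)) (x (Some i)) = eps a i * v i" for i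
  proof -
    have "dotp p (x (Some i)) = (\<Sum>k\<in>UNIV. a i k * v i)" unfolding dotp_def using firm by simp
    moreover have "(\<Sum>k\<in>UNIV. a i k * v i) = (\<Sum>k\<in>UNIV. a i k) * v i" by (simp add: sum_distrib_right)
    ultimately show ?thesis unfolding profit_def eps_def v_def by (simp add: algebra_simps)
  qed
  show inc: "income p x y = 1 + (\<Sum>i\<in>UNIV. eps a i * v i)" unfolding income_def pr p0 by simp
  have hh: "x None None = 0 \<and> p (Some j) * x None (Some j) = a0 j * income p x y" for j
    by (rule GE_household[OF GE])
  show "x None None = 0" using hh by blast
  show "x None (Some k) = a0 k * income p x y / p (Some k)" for k using hh[of k] pp[of "Some k"]
    by (simp add: field_simps)
  show yf: "y (Some i) = v i / p (Some i)" for i using pp[of "Some i"] unfolding v_def by simp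
  show sys: "v j = a0 j + Bop v j" for j
  proof -
    have "v j = p (Some j) * (\<Sum>g\<in>UNIV. x g (Some j))" unfolding v_def GE_mc[OF GE] ..
    also have "\<dots> = p (Some j) * x None (Some j) + (\<Sum>i\<in>UNIV. p (Some j) * x (Some i) (Some j))"
      by (simp add: sum_option_split distrib_left sum_distrib_left)
    also have "\<dots> = a0 j * income p x y + (\<Sum>i\<in>UNIV. a i (Some j) * v i)"
      using hh[of j] firm by simp
    finally show ?thesis unfolding inc Bop_def by (simp add: algebra_simps)
  qed
  have v0: "0 < v i" for i by (rule sol_pos) (rule sys)
  show "MI *v (\<chi> i. ln (p (Some i))) = uvec + Dm *v (\<chi> i. ln (v i))"
  proof (subst vec_eq_iff, intro allI)
    fix i
    have xi: "x (Some i) = (\<lambda>k. a i k * v i / p k)" using xf by auto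
    have "ln (y (Some i)) = ln (prodfun lam a i (\<lambda>k. a i k * v i / p k))"
      using GE_y[OF GE, of i] xi by simp
    also have "\<dots> = ln (lam i) + (\<Sum>k\<in>UNIV. xlogx (a i k))
           + (\<Sum>k\<in>UNIV. a i k) * ln (v i) - (\<Sum>k\<in>UNIV. a i k * ln (p k))"
      by (rule ln_prodfun(2)[OF v0 pp])
    also have "(\<Sum>k\<in>UNIV. a i k * ln (p k)) = (\<Sum>j\<in>UNIV. a i (Some j) * ln (p (Some j)))"
      by (simp add: sum_option_split p0)
    finally have e1: "ln (y (Some i)) = ln (lam i) + (\<Sum>k\<in>UNIV. xlogx (a i k))
           + (\<Sum>k\<in>UNIV. a i k) * ln (v i) - (\<Sum>j\<in>UNIV. a i (Some j) * ln (p (Some j)))" .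
    have e2: "ln (y (Some i)) = ln (v i) - ln (p (Some i))" unfolding yf using v0[of i] pp[of "Some i"]
      by (simp add: ln_div)
    show "(MI *v (\<chi> i. ln (p (Some i))))$i = (uvec + Dm *v (\<chi> i. ln (v i)))$i"
      unfolding MI_apply uvec_def using e1 e2 by (simp add: Dm_apply algebra_simps)
  qed
qed

lemma GE_unique_norm:
  assumes GE: "GE p x y" and p0: "p None = 1" and GE': "GE p' x' y'" and p0': "p' None = 1"
  shows "p = p' \<and> x = x' \<and> y = y'"
proof -
  define v where "v = (\<lambda>i. p (Some i) * y (Some i))"
  define v' where "v' = (\<lambda>i. p' (Some i) * y' (Some i))"
  have s1: "v j = a0 j + Bop v j" for j using GE_char(3)[OF GE p0, of j] unfolding v_def by simp
  have s2: "v' j = a0 j + Bop v' j" for j using GE_char(3)[OF GE' p0', of j] unfolding v'_def by simp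
  have vv: "v = v'" by (rule sol_unique[OF s1 s2])
  have i1: "income p x y = 1 + (\<Sum>i\<in>UNIV. eps a i * v i)" using GE_char(2)[OF GE p0] unfolding v_def by simp
  have i2: "income p' x' y' = 1 + (\<Sum>i\<in>UNIV. eps a i * v' i)" using GE_char(2)[OF GE' p0'] unfolding v'_def by simp
  have II: "income p x y = income p' x' y'" unfolding i1 i2 vv ..
  have m1: "MI *v (\<chi> i. ln (p (Some i))) = uvec + Dm *v (\<chi> i. ln (v i))"
    using GE_char(8)[OF GE p0] unfolding v_def by simp
  have m2: "MI *v (\<chi> i. ln (p' (Some i))) = uvec + Dm *v (\<chi> i. ln (v' i))"
    using GE_char(8)[OF GE' p0'] unfolding v'_def by simp
  have x1: "x (Some i) k = a i k * v i / p k" for i k using GE_char(4)[OF GE p0] unfolding v_def by simp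
  have x2: "x' (Some i) k = a i k * v' i / p' k" for i k using GE_char(4)[OF GE' p0'] unfolding v'_def by simp
  have y1: "y (Some i) = v i / p (Some i)" for i using GE_char(7)[OF GE p0] unfolding v_def by simp
  have y2: "y' (Some i) = v' i / p' (Some i)" for i using GE_char(7)[OF GE' p0'] unfolding v'_def by simp
  have "(\<chi> i. ln (p (Some i))) = (\<chi> i. ln (p' (Some i)))"
    using m1 m2 unfolding vv MI_solve by simp
  then have "ln (p (Some i)) = ln (p' (Some i))" for i by (metis vec_lambda_beta)
  then have "p (Some i) = p' (Some i)" for i
    using GE_ppos[OF GE, of "Some i"] GE_ppos[OF GE', of "Some i"] ln_inj_iff by metis
  then have pp: "p = p'"
  proof -
    assume h: "\<And>i. p (Some i) = p' (Some i)"
    show "p = p'"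
    proof
      fix g show "p g = p' g" using h p0 p0' by (cases g) auto
    qed
  qed
  have xx: "x = x'"
  proof (intro ext)
    fix g k show "x g k = x' g k"
    proof (cases g)
      case None
      then show ?thesis using GE_char(5,6)[OF GE p0] GE_char(5,6)[OF GE' p0'] II pp by (cases k) auto
    next
      case (Some i)
      then show ?thesis using x1 x2 vv pp by simp
    qed
  qed
  have yy: "y = y'"
  proof
    fix g show "y g = y' g"
      using y1 y2 vv pp GE_y0[OF GE] GE_y0[OF GE'] by (cases g) auto
  qed
  show ?thesis using pp xx yy by simp
qed

end


context econ begin

lemma GE_exists: "\<exists>p x y. GE p x y"
proof -
  obtain w where w: "\<And>j. w j = a0 j + Bop w j" using sol_exists by blast
  have w0: "0 < w j" for j by (rule sol_pos[OF w])
  have w0': "0 \<le> w j" for j using w0[of j] by simp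
  have a0': "0 \<le> a0 j" for j using a0_pos[of j] by simp
  define I0 where "I0 = 1 + (\<Sum>i\<in>UNIV. eps a i * w i)"
  have "0 \<le> (\<Sum>i\<in>UNIV. eps a i * w i)" using eps_nn w0'
    by (auto intro!: sum_nonneg mult_nonneg_nonneg)
  then have I0p: "0 < I0" unfolding I0_def by linarith
  define lp where "lp = matrix_inv MI *v (uvec + Dm *v (\<chi> i. ln (w i)))"
  have lpe: "MI *v lp = uvec + Dm *v (\<chi> i. ln (w i))" unfolding lp_def MI_solve ..
  define p where "p g = (case g of None \<Rightarrow> 1 | Some i \<Rightarrow> exp (lp$i))" for g
  have pp: "0 < p g" for g unfolding p_def by (cases g) auto
  have pp': "0 \<le> p g" for g using pp[of g] by simp
  have pn: "p g \<noteq> 0" for g using pp[of g] by simp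
  have p0: "p None = 1" unfolding p_def by simp
  define x where "x g k = (case g of None \<Rightarrow> (case k of None \<Rightarrow> 0 | Some j \<Rightarrow> a0 j * I0 / p (Some j))
                         | Some i \<Rightarrow> a i k * w i / p k)" for g k
  define y where "y g = (case g of None \<Rightarrow> 1 | Some i \<Rightarrow> w i / p (Some i))" for g
  have xS: "x (Some i) = (\<lambda>k. a i k * w i / p k)" for i unfolding x_def by simp
  have yS: "y (Some i) = w i / p (Some i)" for i unfolding y_def by simp
  have prod_eq: "y (Some i) = prodfun lam a i (x (Some i))" for i
  proof -
    have pos1: "0 < prodfun lam a i (x (Some i))" unfolding xS by (rule ln_prodfun(1)[OF w0 pp])
    have pos2: "0 < y (Some i)" unfolding yS using w0 pp by simp
    have "ln (prodfun lam a i (x (Some i))) = ln (lam i) + (\<Sum>k\<in>UNIV. xlogx (a i k))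
           + (\<Sum>k\<in>UNIV. a i k) * ln (w i) - (\<Sum>k\<in>UNIV. a i k * ln (p k))"
      unfolding xS by (rule ln_prodfun(2)[OF w0 pp])
    also have "(\<Sum>k\<in>UNIV. a i k * ln (p k)) = (\<Sum>j\<in>UNIV. a i (Some j) * lp$j)"
      by (simp add: sum_option_split p_def)
    finally have e1: "ln (prodfun lam a i (x (Some i))) = ln (lam i) + (\<Sum>k\<in>UNIV. xlogx (a i k))
           + (\<Sum>k\<in>UNIV. a i k) * ln (w i) - (\<Sum>j\<in>UNIV. a i (Some j) * lp$j)" .
    have e2: "ln (y (Some i)) = ln (w i) - lp$i" unfolding yS using w0[of i]
      by (simp add: ln_div p_def)
    have "(MI *v lp)$i = (uvec + Dm *v (\<chi> i. ln (w i)))$i" using lpe by simp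
    then have e3: "(\<Sum>j\<in>UNIV. a i (Some j) * lp$j) - lp$i = ln (lam i) + (\<Sum>k\<in>UNIV. xlogx (a i k))
        + ((\<Sum>k\<in>UNIV. a i k) - 1) * ln (w i)"
      unfolding MI_apply by (simp add: uvec_def Dm_apply)
    have "ln (y (Some i)) = ln (prodfun lam a i (x (Some i)))" unfolding e1 e2 using e3
      by (simp add: algebra_simps)
    then show ?thesis using pos1 pos2 by simp
  qed
  have vS: "p (Some i) * y (Some i) = w i" for i unfolding yS using pp[of "Some i"] by simp
  have dotS: "dotp p (x (Some i)) = (\<Sum>k\<in>UNIV. a i k) * w i" for i
    unfolding dotp_def xS by (simp add: sum_distrib_right pn)
  have profS: "profit p i (y (Some i)) (x (Some i)) = eps a i * w i" for i
    unfolding profit_def vS dotS eps_def by (simp add: algebra_simps)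
  have firmopt: "profit p i (prodfun lam a i xi) xi \<le> profit p i (y (Some i)) (x (Some i))"
    if nn: "nonneg xi" for i xi
  proof -
    define z where "z k = p k * xi k / (a i k * w i)" for k
    have z0: "0 \<le> z k" for k unfolding z_def using pp[of k] nn a_nn[of i k] w0[of i]
      by (auto simp: nonneg_def intro!: divide_nonneg_nonneg)
    have fac: "cpow (xi k) (a i k) = cpow (z k) (a i k) * cpow (x (Some i) k) (a i k)" for k
    proof (cases "a i k = 0")
      case True then show ?thesis by (simp add: cpow_def)
    next
      case False
      have "xi k = z k * x (Some i) k" unfolding z_def xS using False pp[of k] w0[of i]
        by (simp add: field_simps)
      then show ?thesis by (simp add: cpow_mult)
    qed
    have "p (Some i) * prodfun lam a i xi = (\<Prod>k\<in>UNIV. cpow (z k) (a i k)) * (p (Some i) * prodfun lam a i (x (Some i)))"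
      unfolding prodfun_def fac prod.distrib by (simp add: algebra_simps)
    also have "\<dots> = (\<Prod>k\<in>UNIV. cpow (z k) (a i k)) * w i" using prod_eq[of i] vS[of i] by simp
    finally have pf: "p (Some i) * prodfun lam a i xi = (\<Prod>k\<in>UNIV. cpow (z k) (a i k)) * w i" .
    have "(\<Sum>k\<in>UNIV. w i * (a i k * z k)) \<le> dotp p xi" unfolding dotp_def
    proof (rule sum_mono)
      fix k
      show "w i * (a i k * z k) \<le> p k * xi k"
      proof (cases "a i k = 0")
        case True then show ?thesis using pp[of k] nn by (simp add: nonneg_def)
      next
        case False then show ?thesis unfolding z_def using w0[of i] by (simp add: field_simps)
      qed
    qed
    then have dle: "w i * (\<Sum>k\<in>UNIV. a i k * z k) \<le> dotp p xi" by (simp add: sum_distrib_left)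
    have am: "(\<Prod>k\<in>UNIV. cpow (z k) (a i k)) \<le> (\<Sum>k\<in>UNIV. a i k * z k) + (1 - (\<Sum>k\<in>UNIV. a i k))"
      by (rule amgm) (auto simp: z0 a_nn a_sum)
    have "profit p i (prodfun lam a i xi) xi \<le> w i * ((\<Sum>k\<in>UNIV. a i k * z k) + (1 - (\<Sum>k\<in>UNIV. a i k))) - w i * (\<Sum>k\<in>UNIV. a i k * z k)"
      unfolding profit_def pf using dle am w0[of i]
      by (smt (verit, best) mult.commute mult_left_mono)
    also have "\<dots> = eps a i * w i" by (simp add: eps_def algebra_simps)
    finally show ?thesis using profS by simp
  qed
  have inc: "income p x y = I0" unfolding income_def profS I0_def p0 ..
  have dot0: "dotp p (x None) = I0"
  proof -
    have "dotp p (x None) = (\<Sum>j\<in>UNIV. a0 j * I0)"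
      unfolding dotp_def sum_option_split by (simp add: x_def pn)
    also have "\<dots> = I0" by (simp add: sum_distrib_right[symmetric] a0_sum)
    finally show ?thesis .
  qed
  have hhopt: "utility a0 x0 \<le> utility a0 (x None)" if nn: "nonneg x0" and bud: "dotp p x0 \<le> income p x y" for x0
  proof -
    define z where "z k = p (Some k) * x0 (Some k) / (a0 k * I0)" for k
    have z0: "0 \<le> z k" for k unfolding z_def using pp[of "Some k"] nn a0_pos[of k] I0p
      by (auto simp: nonneg_def intro!: divide_nonneg_nonneg)
    have "x0 (Some k) = z k * x None (Some k)" for k unfolding z_def x_def
      using pp[of "Some k"] a0_pos[of k] I0p by (simp add: field_simps)
    then have "utility a0 x0 = (\<Prod>k\<in>UNIV. cpow (z k) (a0 k)) * utility a0 (x None)"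
      unfolding utility_def by (simp add: prod_cpow_scale)
    moreover have "(\<Prod>k\<in>UNIV. cpow (z k) (a0 k)) \<le> (\<Sum>k\<in>UNIV. a0 k * z k) + (1 - (\<Sum>k\<in>UNIV. a0 k))"
      by (rule amgm) (auto simp: z0 a0_sum less_imp_le[OF a0_pos])
    moreover have "(\<Sum>k\<in>UNIV. a0 k * z k) = (\<Sum>k\<in>UNIV. p (Some k) * x0 (Some k)) / I0"
      unfolding z_def using a0_pos by (simp add: sum_divide_distrib less_imp_neq[symmetric])
    moreover have "(\<Sum>k\<in>UNIV. p (Some k) * x0 (Some k)) \<le> I0"
    proof -
      have "0 \<le> p None * x0 None" using pp[of None] nn by (simp add: nonneg_def)
      then show ?thesis using bud unfolding inc dotp_def sum_option_split by linarith
    qed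
    moreover have "0 \<le> utility a0 (x None)" unfolding utility_def x_def
      using pp' a0' I0p by (auto intro!: prod_nonneg cpow_nonneg divide_nonneg_nonneg mult_nonneg_nonneg)
    ultimately show ?thesis using I0p a0_sum
      by (smt (verit, best) divide_le_eq_1_pos mult_left_le_one_le mult_nonneg_nonneg prod_nonneg cpow_nonneg z0)
  qed
  have mc: "(\<Sum>j\<in>UNIV. x j g) = y g" for g
  proof (cases g)
    case None
    have "(\<Sum>j\<in>UNIV. x j None) = (\<Sum>i\<in>UNIV. a i None * w i)"
      unfolding sum_option_split by (simp add: x_def p0)
    also have "\<dots> = 1" by (rule sol_labor[OF w])
    finally show ?thesis using None by (simp add: y_def)
  next
    case (Some j)
    have "(\<Sum>g\<in>UNIV. x g (Some j)) = (a0 j * I0 + (\<Sum>i\<in>UNIV. a i (Some j) * w i)) / p (Some j)"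
      unfolding sum_option_split by (simp add: x_def add_divide_distrib sum_divide_distrib)
    also have "a0 j * I0 + (\<Sum>i\<in>UNIV. a i (Some j) * w i) = w j"
      using w[of j] unfolding Bop_def I0_def by (simp add: algebra_simps)
    finally show ?thesis using Some by (simp add: y_def)
  qed
  have "GE p x y"
    unfolding general_equilibrium_def
  proof (intro conjI allI impI)
    show "nonneg p" using pp' by (simp add: nonneg_def)
    show "y None = 1" by (simp add: y_def)
    fix i
    show "nonneg (x (Some i))" unfolding nonneg_def xS using a_nn w0' pp
      by (auto intro!: divide_nonneg_pos mult_nonneg_nonneg)
    show "y (Some i) = prodfun lam a i (x (Some i))" by (rule prod_eq)
    fix xi :: "'n option \<Rightarrow> real" assume "nonneg xi"
    then show "profit p i (prodfun lam a i xi) xi \<le> profit p i (y (Some i)) (x (Some i))" by (rule firmopt)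
  next
    show "nonneg (x None)" unfolding nonneg_def x_def using a0' I0p pp
      by (auto split: option.split intro!: divide_nonneg_pos mult_nonneg_nonneg)
    show "dotp p (x None) \<le> income p x y" using dot0 inc by simp
    fix x0 :: "'n option \<Rightarrow> real" assume "nonneg x0" "dotp p x0 \<le> income p x y"
    then show "utility a0 x0 \<le> utility a0 (x None)" by (rule hhopt)
  next
    fix g show "(\<Sum>j\<in>UNIV. x j g) = y g" by (rule mc)
  qed
  then show ?thesis by blast
qed

end

theorem mainTheorem2:
  fixes a0 :: "'n::finite \<Rightarrow> real"
    and sec :: "'n \<Rightarrow> 's::finite"
    and b :: "'n \<Rightarrow> 's option \<Rightarrow> real"
    and a :: "'n \<Rightarrow> 'n option \<Rightarrow> real"
    and lam :: "'n \<Rightarrow> real"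
  assumes a0_pos: "\<forall>j. 0 < a0 j"
    and a0_sum: "(\<Sum>j\<in>UNIV. a0 j) = 1"
    and b_nonneg: "\<forall>i l. 0 \<le> b i l"
    and b_sum: "\<forall>i. (\<Sum>l\<in>UNIV. b i l) \<le> 1"
    and b_labor: "\<forall>i. 0 < b i None"
    and b_some: "\<exists>i0 l. 0 < b i0 (Some l)"
    and adm: "admissible sec b a"
    and lam_pos: "\<forall>i. 0 < lam i"
  shows "(\<exists>p x y. general_equilibrium a0 lam a p x y) \<and>
         (\<forall>p x y p' x' y'. general_equilibrium a0 lam a p x y \<longrightarrow>
             general_equilibrium a0 lam a p' x' y' \<longrightarrow>
             (\<exists>c>0. p' = (\<lambda>g. c * p g) \<and> x' = x \<and> y' = y)) \<and>
         (\<forall>p x y. general_equilibrium a0 lam a p x y \<longrightarrow> p None = 1 \<longrightarrow>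
            (let v = (\<lambda>i. p (Some i) * y (Some i)) in
              (\<forall>j. v j = a0 j + a0 j * (\<Sum>i\<in>UNIV. eps a i * v i) + (\<Sum>i\<in>UNIV. a i (Some j) * v i)) \<and>
              (\<Sum>i\<in>UNIV. a i None * v i) = 1 \<and>
              (\<forall>i. profit p i (y (Some i)) (x (Some i)) = (1 - (\<Sum>j\<in>UNIV. a i j)) * v i \<and>
                   profit p i (y (Some i)) (x (Some i)) = (1 - (\<Sum>l\<in>UNIV. b i l)) * v i) \<and>
              invertible (shareA a - mat 1) \<and>
              (\<chi> i. ln (p (Some i))) =
                 matrix_inv (shareA a - mat 1) *v
                   (\<chi> i. ln (lam i) + (\<Sum>j\<in>UNIV. xlogx (a i j)))
                 + (matrix_inv (shareA a - mat 1) ** (\<chi> i k. if i = k then (\<Sum>j\<in>UNIV. a i j) - 1 else 0))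
                   *v (\<chi> i. ln (v i))))"
proof -
  have a_nn: "\<And>i k. 0 \<le> a i k" using adm unfolding admissible_def nonneg_def by blast
  have a_lab: "\<And>i. 0 < a i None" using adm b_labor unfolding admissible_def by auto
  have ab: "(\<Sum>k\<in>UNIV. a i k) = (\<Sum>l\<in>UNIV. b i l)" for i
  proof -
    have "(\<Sum>j\<in>UNIV. a i (Some j)) = (\<Sum>l\<in>UNIV. \<Sum>j\<in>{j\<in>UNIV. sec j = l}. a i (Some j))"
      by (rule sum.group[symmetric]) auto
    also have "\<dots> = (\<Sum>l\<in>UNIV. b i (Some l))" using adm unfolding admissible_def by simp
    finally show ?thesis using adm unfolding admissible_def by (simp add: sum_option_split)
  qed
  have a_sum: "\<And>i. (\<Sum>k\<in>UNIV. a i k) \<le> 1" using ab b_sum by simp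
  interpret E: econ a0 a lam
    by unfold_locales (use a0_pos a0_sum a_nn a_lab a_sum lam_pos in auto)
  show ?thesis
  proof (intro conjI allI impI)
    show "\<exists>p x y. general_equilibrium a0 lam a p x y" by (rule E.GE_exists)
  next
    fix p x y p' x' y'
    assume G: "general_equilibrium a0 lam a p x y" and G': "general_equilibrium a0 lam a p' x' y'"
    have P0: "0 < p None" by (rule E.GE_p0[OF G])
    have P0': "0 < p' None" by (rule E.GE_p0[OF G'])
    define q where "q = (\<lambda>g. (1 / p None) * p g)"
    define q' where "q' = (\<lambda>g. (1 / p' None) * p' g)"
    have Gq: "general_equilibrium a0 lam a q x y" unfolding q_def by (rule E.GE_scale[OF G]) (use P0 in simp)
    have Gq': "general_equilibrium a0 lam a q' x' y'" unfolding q'_def by (rule E.GE_scale[OF G']) (use P0' in simp)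
    have "q = q' \<and> x = x' \<and> y = y'"
      by (rule E.GE_unique_norm[OF Gq _ Gq']) (use P0 P0' in \<open>auto simp: q_def q'_def\<close>)
    then have qq: "q = q'" and xx: "x = x'" and yy: "y = y'" by auto
    have "p' = (\<lambda>g. (p' None / p None) * p g)"
    proof
      fix g
      have "q g = q' g" using qq by simp
      then show "p' g = (p' None / p None) * p g" using P0 P0' unfolding q_def q'_def
        by (simp add: field_simps)
    qed
    then show "\<exists>c>0. p' = (\<lambda>g. c * p g) \<and> x' = x \<and> y' = y"
      using P0 P0' xx yy by (intro exI[of _ "p' None / p None"]) auto
  next
    fix p x y
    assume G: "general_equilibrium a0 lam a p x y" and p0: "p None = 1"
    define v where "v = (\<lambda>i. p (Some i) * y (Some i))"
    have s: "v j = a0 j + E.Bop v j" for j using E.GE_char(3)[OF G p0, of j] unfolding v_def by simp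
    have c1: "\<forall>j. v j = a0 j + a0 j * (\<Sum>i\<in>UNIV. eps a i * v i) + (\<Sum>i\<in>UNIV. a i (Some j) * v i)"
    proof
      fix j show "v j = a0 j + a0 j * (\<Sum>i\<in>UNIV. eps a i * v i) + (\<Sum>i\<in>UNIV. a i (Some j) * v i)"
        using s[of j] unfolding E.Bop_def by linarith
    qed
    have c2: "(\<Sum>i\<in>UNIV. a i None * v i) = 1" by (rule E.sol_labor[OF s])
    have pr: "profit p i (y (Some i)) (x (Some i)) = eps a i * v i" for i
      using E.GE_char(1)[OF G p0, of i] unfolding v_def by simp
    have c3: "\<forall>i. profit p i (y (Some i)) (x (Some i)) = (1 - (\<Sum>j\<in>UNIV. a i j)) * v i \<and>
                   profit p i (y (Some i)) (x (Some i)) = (1 - (\<Sum>l\<in>UNIV. b i l)) * v i"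
      using pr ab by (simp add: eps_def)
    have c4: "invertible (shareA a - mat 1)" using E.MI_invertible unfolding E.MI_def .
    have m: "E.MI *v (\<chi> i. ln (p (Some i))) = E.uvec + E.Dm *v (\<chi> i. ln (v i))"
      using E.GE_char(8)[OF G p0] unfolding v_def by simp
    then have "(\<chi> i. ln (p (Some i))) = matrix_inv E.MI *v (E.uvec + E.Dm *v (\<chi> i. ln (v i)))"
      unfolding E.MI_solve .
    also have "\<dots> = matrix_inv E.MI *v E.uvec + (matrix_inv E.MI ** E.Dm) *v (\<chi> i. ln (v i))"
      by (simp add: matrix_vector_right_distrib matrix_vector_mul_assoc)
    finally have c5: "(\<chi> i. ln (p (Some i))) =
                 matrix_inv (shareA a - mat 1) *v
                   (\<chi> i. ln (lam i) + (\<Sum>j\<in>UNIV. xlogx (a i j)))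
                 + (matrix_inv (shareA a - mat 1) ** (\<chi> i k. if i = k then (\<Sum>j\<in>UNIV. a i j) - 1 else 0))
                   *v (\<chi> i. ln (v i))"
      unfolding E.MI_def E.uvec_def E.Dm_def .
    show "let v = (\<lambda>i. p (Some i) * y (Some i)) in
              (\<forall>j. v j = a0 j + a0 j * (\<Sum>i\<in>UNIV. eps a i * v i) + (\<Sum>i\<in>UNIV. a i (Some j) * v i)) \<and>
              (\<Sum>i\<in>UNIV. a i None * v i) = 1 \<and>
              (\<forall>i. profit p i (y (Some i)) (x (Some i)) = (1 - (\<Sum>j\<in>UNIV. a i j)) * v i \<and>
                   profit p i (y (Some i)) (x (Some i)) = (1 - (\<Sum>l\<in>UNIV. b i l)) * v i) \<and>
              invertible (shareA a - mat 1) \<and>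
              (\<chi> i. ln (p (Some i))) =
                 matrix_inv (shareA a - mat 1) *v
                   (\<chi> i. ln (lam i) + (\<Sum>j\<in>UNIV. xlogx (a i j)))
                 + (matrix_inv (shareA a - mat 1) ** (\<chi> i k. if i = k then (\<Sum>j\<in>UNIV. a i j) - 1 else 0))
                   *v (\<chi> i. ln (v i))"
      unfolding Let_def v_def[symmetric] using c1 c2 c3 c4 c5 by blast
  qed
qed

end
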